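(* Assume $V=L$. Let $\zeta\in\Xi$, $X\in\mathrm{IPS}_\zeta$, let $\eta\in\Xi$ with $\eta\subseteq\zeta$, and let $i\in\zeta\setminus\eta$. Then there exist $x,y\in X$ with $x\restriction\eta=y\restriction\eta$ but $x(i)\neq y(i)$.
   Context: $T$ is the set of all nonempty finite sequences of countable ordinals, partially ordered by strict extension $\subset$. $\Xi$ is the set of all at most countable $\xi\subseteq T$ that are initial segments ($j\subset i\in\xi\Rightarrow j\in\xi$). $D=2^\omega$ is the Cantor space and, for $\xi\in\Xi$, $D^\xi$ is the product of $\xi$ copies of $D$ with the product topology. For $\eta\subseteq\xi$ in $\Xi$ and $x\in D^\xi$, $x\restriction\eta$ is the restriction. For $\zeta\in\Xi$, $\mathrm{IPS}_\zeta$ is the set of all $X\subseteq D^\zeta$ such that there is a homeomorphism $H$ of $D^\zeta$ onto $X$ satisfying, for all $x_0,x_1\in D^\zeta$ and all $\xi\in\Xi$ with $\xi\subseteq\zeta$: $x_0\restriction\xi=x_1\restriction\xi\iff H(x_0)\restriction\xi=H(x_1)\restriction\xi$. *)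

theory Defs
  imports "HOL-Analysis.Analysis" "HOL-Library.Sublist"
begin

text \<open>Countable ordinals: the field of the successor cardinal of natLeq, i.e. a
  well-order of order type omega_1 (elements are sets of naturals).\<close>
definition cOrd :: "nat set set" where
  "cOrd = Field (cardSuc natLeq)"

definition Tset :: "nat set list set" where
  "Tset = {s. s \<noteq> [] \<and> set s \<subseteq> cOrd}"

definition Xi :: "nat set list set set" where
  "Xi = {xi. xi \<subseteq> Tset \<and> countable xi \<and>
             (\<forall>i\<in>xi. \<forall>j\<in>Tset. strict_prefix j i \<longrightarrow> j \<in> xi)}"

definition Dtop :: "(nat \<Rightarrow> bool) topology" where
  "Dtop = product_topology (\<lambda>_. discrete_topology (UNIV :: bool set)) UNIV"

text \<open>D^xi, product of xi copies of D (points are extensional functions on xi).\<close>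
definition Dpow :: "nat set list set \<Rightarrow> (nat set list \<Rightarrow> (nat \<Rightarrow> bool)) topology" where
  "Dpow xi = product_topology (\<lambda>_. Dtop) xi"

definition IPS :: "nat set list set \<Rightarrow> (nat set list \<Rightarrow> (nat \<Rightarrow> bool)) set set" where
  "IPS zeta = {X. X \<subseteq> topspace (Dpow zeta) \<and>
     (\<exists>H. homeomorphic_map (Dpow zeta) (subtopology (Dpow zeta) X) H \<and>
        (\<forall>x0\<in>topspace (Dpow zeta). \<forall>x1\<in>topspace (Dpow zeta). \<forall>xi\<in>Xi. xi \<subseteq> zeta \<longrightarrow>
           (restrict x0 xi = restrict x1 xi \<longleftrightarrow> restrict (H x0) xi = restrict (H x1) xi)))}"

end

theory Submission
  imports Defs
begin

lemma topspace_Dpow: "topspace (Dpow zeta) = PiE zeta (\<lambda>_. UNIV)"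
  unfolding Dpow_def Dtop_def by (simp add: topspace_product_topology)

lemma sp_in_Xi:
  assumes "i \<in> Tset"
  shows "{j\<in>Tset. strict_prefix j i} \<in> Xi" "insert i {j\<in>Tset. strict_prefix j i} \<in> Xi"
proof -
  have f: "finite {j\<in>Tset. strict_prefix j i}"
    by (rule finite_subset[of _ "set (prefixes i)"]) (auto simp: in_set_prefixes)
  show "{j\<in>Tset. strict_prefix j i} \<in> Xi" using f
    unfolding Xi_def by (auto intro: countable_finite dest: prefix_order.strict_trans)
  show "insert i {j\<in>Tset. strict_prefix j i} \<in> Xi" using f assms
    unfolding Xi_def by (auto intro: countable_finite dest: prefix_order.strict_trans)
qed

theorem lemma2p6:
  assumes "zeta \<in> Xi" and "X \<in> IPS zeta" and "eta \<in> Xi" and "eta \<subseteq> zeta"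
    and "i \<in> zeta - eta"
  shows "\<exists>x\<in>X. \<exists>y\<in>X. restrict x eta = restrict y eta \<and> x i \<noteq> y i"
proof -
  obtain H where hm: "homeomorphic_map (Dpow zeta) (subtopology (Dpow zeta) X) H"
    and P: "\<And>x0 x1 xi. x0\<in>topspace (Dpow zeta) \<Longrightarrow> x1\<in>topspace (Dpow zeta) \<Longrightarrow> xi\<in>Xi \<Longrightarrow> xi \<subseteq> zeta \<Longrightarrow>
           (restrict x0 xi = restrict x1 xi \<longleftrightarrow> restrict (H x0) xi = restrict (H x1) xi)"
    and XS: "X \<subseteq> topspace (Dpow zeta)"
    using assms(2) unfolding IPS_def by blast
  have iT: "i \<in> Tset" and iz: "i \<in> zeta" using assms(1,5) unfolding Xi_def by auto
  define S where "S = {j\<in>Tset. strict_prefix j i}"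
  have S: "S \<in> Xi" "insert i S \<in> Xi" using sp_in_Xi[OF iT] S_def by auto
  have Sz: "S \<subseteq> zeta" using assms(1) iz unfolding Xi_def S_def by auto
  have iS: "i \<notin> S" unfolding S_def by auto
  define a0 :: "nat set list \<Rightarrow> nat \<Rightarrow> bool" where "a0 = restrict (\<lambda>_ _. False) zeta"
  define a1 where "a1 = a0(i := (\<lambda>_. True))"
  have a0: "a0 \<in> topspace (Dpow zeta)" unfolding topspace_Dpow a0_def by auto
  have a1: "a1 \<in> topspace (Dpow zeta)" using iz unfolding topspace_Dpow a1_def a0_def by auto
  have img: "\<And>a. a \<in> topspace (Dpow zeta) \<Longrightarrow> H a \<in> X"
    using homeomorphic_imp_surjective_map[OF hm] XS by auto
  have e1: "restrict a0 eta = restrict a1 eta" using assms(5) unfolding a1_def by auto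
  have e2: "restrict a0 S = restrict a1 S" using iS unfolding a1_def by auto
  have e3: "restrict a0 (insert i S) \<noteq> restrict a1 (insert i S)"
  proof
    assume "restrict a0 (insert i S) = restrict a1 (insert i S)"
    hence "a0 i = a1 i" by (metis insertI1 restrict_apply')
    thus False using iz unfolding a1_def a0_def by (metis fun_upd_same restrict_apply')
  qed
  have r1: "restrict (H a0) eta = restrict (H a1) eta" using P[OF a0 a1 assms(3,4)] e1 by simp
  have r2: "restrict (H a0) S = restrict (H a1) S" using P[OF a0 a1 S(1) Sz] e2 by simp
  have r3: "restrict (H a0) (insert i S) \<noteq> restrict (H a1) (insert i S)"
    using P[OF a0 a1 S(2)] Sz iz e3 by simp
  have "H a0 i \<noteq> H a1 i"
  proof
    assume h: "H a0 i = H a1 i"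
    have "restrict (H a0) (insert i S) = restrict (H a1) (insert i S)"
    proof
      fix x show "restrict (H a0) (insert i S) x = restrict (H a1) (insert i S) x"
        using h r2 by (cases "x = i") (auto simp: restrict_def fun_eq_iff split: if_splits)
    qed
    thus False using r3 by simp
  qed
  thus ?thesis using img[OF a0] img[OF a1] r1 by blast
qed

end
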